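(* Consider an unlabeled tabletop rearrangement instance in which all objects have congruent disc footprints (uniform cylinders). Then its unlabeled dependency graph is a planar bipartite graph with maximum degree at most $5$.
   Context: A tabletop rearrangement instance consists of $n$ objects (generalized cylinders of equal height, so only their planar footprints matter) in a bounded planar workspace, a start arrangement and a goal arrangement. An arrangement assigns to each object a pose in $SE(2)$; it is feasible if no two placed footprints overlap, where two placed footprints overlap if their interiors intersect (for discs of radius $r$: centers at distance $<2r$). Both the start and goal arrangements are feasible. In the unlabeled setting objects are interchangeable. The unlabeled dependency graph is the bipartite graph with one start vertex for each start pose and one goal vertex for each goal pose, with an edge between a start vertex and a goal vertex iff a footprint placed at that start pose overlaps a footprint placed at that goal pose. *)

theory Defs
  imports "HOL-Analysis.Analysis"
begin

type_synonym point = "real^2"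

definition disc_overlap :: "real \<Rightarrow> point \<Rightarrow> point \<Rightarrow> bool" where
  "disc_overlap r c d \<longleftrightarrow> ball c r \<inter> ball d r \<noteq> {}"

definition feasible_arrangement :: "real \<Rightarrow> nat \<Rightarrow> (nat \<Rightarrow> point) \<Rightarrow> bool" where
  "feasible_arrangement r n c \<longleftrightarrow>
     (\<forall>i<n. \<forall>j<n. i \<noteq> j \<longrightarrow> \<not> disc_overlap r (c i) (c j))"

text \<open>Unlabeled dependency graph: start vertices Inl i, goal vertices Inr j (i, j < n).\<close>
definition dep_vertices :: "nat \<Rightarrow> (nat + nat) set" where
  "dep_vertices n = Inl ` {..<n} \<union> Inr ` {..<n}"

fun dep_edge :: "real \<Rightarrow> (nat \<Rightarrow> point) \<Rightarrow> (nat \<Rightarrow> point) \<Rightarrow> nat + nat \<Rightarrow> nat + nat \<Rightarrow> bool" where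
  "dep_edge r s g (Inl i) (Inr j) = disc_overlap r (s i) (g j)"
| "dep_edge r s g (Inr j) (Inl i) = disc_overlap r (s i) (g j)"
| "dep_edge r s g _ _ = False"

definition planar_graph :: "'v set \<Rightarrow> ('v \<Rightarrow> 'v \<Rightarrow> bool) \<Rightarrow> bool" where
  "planar_graph V E \<longleftrightarrow>
    (\<exists>(p :: 'v \<Rightarrow> point) (\<gamma> :: 'v \<Rightarrow> 'v \<Rightarrow> real \<Rightarrow> point).
       inj_on p V \<and>
       (\<forall>u\<in>V. \<forall>v\<in>V. E u v \<longrightarrow>
          arc (\<gamma> u v) \<and> pathstart (\<gamma> u v) = p u \<and> pathfinish (\<gamma> u v) = p v \<and>
          path_image (\<gamma> u v) \<inter> p ` V = {p u, p v}) \<and>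
       (\<forall>u\<in>V. \<forall>v\<in>V. \<forall>u'\<in>V. \<forall>v'\<in>V. E u v \<longrightarrow> E u' v' \<longrightarrow> {u, v} \<noteq> {u', v'} \<longrightarrow>
          path_image (\<gamma> u v) \<inter> path_image (\<gamma> u' v') \<subseteq> p ` ({u, v} \<inter> {u', v'})))"

definition max_degree_le :: "'v set \<Rightarrow> ('v \<Rightarrow> 'v \<Rightarrow> bool) \<Rightarrow> nat \<Rightarrow> bool" where
  "max_degree_le V E k \<longleftrightarrow> (\<forall>v\<in>V. card {w\<in>V. E v w} \<le> k)"

end

theory Submission
  imports Defs
begin
lemma overlap_iff: assumes "r > 0" shows "disc_overlap r c d \<longleftrightarrow> dist c d < 2*r"
proof
  assume "disc_overlap r c d"
  then obtain x where "dist c x < r" "dist d x < r" unfolding disc_overlap_def by auto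
  moreover have "dist c d \<le> dist c x + dist d x" using dist_triangle[of c d x] by (simp add: dist_commute)
  ultimately show "dist c d < 2*r" by linarith
next
  assume "dist c d < 2*r"
  then have "midpoint c d \<in> ball c r \<inter> ball d r"
    by (simp add: dist_midpoint)
  then show "disc_overlap r c d" unfolding disc_overlap_def by blast
qed

lemma seg_dist:
  fixes a b x :: "'a::real_normed_vector"
  assumes "x \<in> closed_segment a b" shows "dist a x + dist x b = dist a b"
proof -
  obtain u where u: "0 \<le> u" "u \<le> 1" "x = (1 - u) *\<^sub>R a + u *\<^sub>R b"
    using assms in_segment(1) by blast
  have 1: "a - x = u *\<^sub>R (a - b)" "x - b = (1 - u) *\<^sub>R (a - b)"
    using u(3) by (auto simp: algebra_simps)
  have "dist a x = u * dist a b" "dist x b = (1 - u) * dist a b"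
    using u unfolding dist_norm 1 by simp_all
  then show ?thesis by (simp add: algebra_simps)
qed

lemma seg_disjoint:
  fixes A B C D :: "'a::real_normed_vector"
  assumes "dist A C \<ge> 2*r" "dist B D \<ge> 2*r" "dist A B < 2*r" "dist C D < 2*r"
  shows "closed_segment A B \<inter> closed_segment C D = {}"
proof (rule ccontr)
  assume "closed_segment A B \<inter> closed_segment C D \<noteq> {}"
  then obtain x where x: "x \<in> closed_segment A B" "x \<in> closed_segment C D" by blast
  have "dist A x + dist x B = dist A B" "dist C x + dist x D = dist C D"
    using seg_dist x by auto
  moreover have "dist A C \<le> dist A x + dist x C" "dist B D \<le> dist B x + dist x D"
    by (auto intro: dist_triangle)
  ultimately show False using assms by (simp add: dist_commute)
qed

lemma seg_common:
  fixes A B D :: "'a::real_normed_vector"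
  assumes "dist B D \<ge> 2*r" "dist A B < 2*r" "dist A D < 2*r"
  shows "closed_segment A B \<inter> closed_segment A D \<subseteq> {A}"
proof
  fix x assume x: "x \<in> closed_segment A B \<inter> closed_segment A D"
  show "x \<in> {A}"
  proof (rule ccontr)
    assume xA: "x \<notin> {A}"
    obtain u where u: "0 \<le> u" "u \<le> 1" "x = (1 - u) *\<^sub>R A + u *\<^sub>R B"
      using x in_segment(1) by blast
    obtain v where v: "0 \<le> v" "v \<le> 1" "x = (1 - v) *\<^sub>R A + v *\<^sub>R D"
      using x in_segment(1) by blast
    have u0: "u > 0" using u xA by (cases "u = 0") auto
    have v0: "v > 0" using v xA by (cases "v = 0") auto
    have eq: "u *\<^sub>R (B - A) = v *\<^sub>R (D - A)"
      using u(3) v(3) by (simp add: algebra_simps)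
    show False
    proof (cases "v \<le> u")
      case True
      have "u *\<^sub>R (B - D) = (u - v) *\<^sub>R (A - D)"
        using eq by (simp add: algebra_simps)
      then have "u * dist B D = (u - v) * dist A D"
        using True u0 by (metis abs_of_nonneg diff_ge_0_iff_ge dist_norm less_imp_le norm_scaleR)
      also have "\<dots> \<le> u * dist A D" using v0 by (simp add: mult_right_mono)
      also have "\<dots> < u * (2*r)" using u0 assms(3) by simp
      finally have "u * dist B D < u * (2*r)" .
      moreover have "u * (2*r) \<le> u * dist B D" using u0 assms(1) by (intro mult_left_mono) auto
      ultimately show False by linarith
    next
      case False
      have "v *\<^sub>R (D - B) = (v - u) *\<^sub>R (A - B)"
        using eq by (simp add: algebra_simps)
      then have "v * dist D B = (v - u) * dist A B"
        using False v0 by (metis abs_of_nonneg diff_ge_0_iff_ge dist_norm less_imp_le norm_scaleR nle_le)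
      also have "\<dots> \<le> v * dist A B" using u0 by (simp add: mult_right_mono)
      also have "\<dots> < v * (2*r)" using v0 assms(2) by simp
      finally have "v * dist D B < v * (2*r)" .
      moreover have "v * (2*r) \<le> v * dist D B" using v0 assms(1) by (intro mult_left_mono) (auto simp: dist_commute)
      ultimately show False by linarith
    qed
  qed
qed




lemma inner2: "(x::real^2) \<bullet> y = x$1 * y$1 + x$2 * y$2"
  by (simp add: inner_vec_def sum_2)

lemma polar2:
  fixes v :: "real^2" assumes "v \<noteq> 0"
  obtains t where "v$1 = norm v * cos t" "v$2 = norm v * sin t" "0 \<le> t" "t < 2*pi"
proof -
  have n: "norm v > 0" using assms by simp
  have "norm v ^ 2 = v \<bullet> v" by (rule power2_norm_eq_inner)
  then have "norm v ^ 2 = v$1^2 + v$2^2" by (simp only: inner2 power2_eq_square)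
  then have nn: "v$1^2 + v$2^2 = norm v^2" by simp
  have "(v$1 / norm v)^2 + (v$2 / norm v)^2 = (v$1^2 + v$2^2) / norm v^2" by (simp add: power_divide add_divide_distrib)
  also have "\<dots> = 1" unfolding nn using n by simp
  finally have "(v$1 / norm v)^2 + (v$2 / norm v)^2 = 1" .
  then obtain t where "v$1 / norm v = cos t" "v$2 / norm v = sin t" "0 \<le> t" "t < 2*pi" using sincos_total_2pi by metis
  then show ?thesis using that n by (simp add: field_simps)
qed

lemma cos_big: assumes "\<bar>x\<bar> < pi/3" shows "cos x > 1/2"
proof -
  have "cos \<bar>x\<bar> > cos (pi/3)" using assms by (intro cos_monotone_0_pi) auto
  then show ?thesis by (simp add: cos_60)
qed

lemma cos_small_range:
  assumes "0 \<le> x" "x < 2*pi" "cos x < 1/2" shows "pi/3 < x \<and> x < 5*pi/3"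
proof (rule ccontr)
  assume "\<not> ?thesis"
  then consider "x \<le> pi/3" | "x \<ge> 5*pi/3" by linarith
  then show False
  proof cases
    case 1 then have "cos x \<ge> cos (pi/3)" using assms by (intro cos_monotone_0_pi_le) auto
    then show False using assms by (simp add: cos_60)
  next
    case 2
    have "cos (2*pi - x) \<ge> cos (pi/3)" using assms 2 by (intro cos_monotone_0_pi_le) auto
    moreover have "cos (2*pi - x) = cos x" by (simp add: cos_diff)
    ultimately show False using assms by (simp add: cos_60)
  qed
qed

lemma close_pts:
  fixes a b r C :: real
  assumes "0 < a" "a < 2*r" "0 < b" "b < 2*r" "C \<ge> 1/2"
  shows "a^2 + b^2 - 2*a*b*C < (2*r)^2"
proof -
  have "a^2 + b^2 - 2*a*b*C \<le> a^2 + b^2 - a*b"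
  proof -
    have "a*b*1 \<le> a*b*(2*C)" using assms by (intro mult_left_mono) auto
    then show ?thesis by (simp add: algebra_simps)
  qed
  also have "\<dots> < (2*r)^2"
  proof (cases "a \<le> b")
    case True
    have "a^2 - a*b \<le> 0" using True assms by (simp add: power2_eq_square mult_left_mono)
    moreover have "b^2 < (2*r)^2" using assms by (intro power_strict_mono) auto
    ultimately show ?thesis by linarith
  next
    case False
    have "b^2 - a*b \<le> 0" using False assms by (simp add: power2_eq_square mult_right_mono)
    moreover have "a^2 < (2*r)^2" using assms by (intro power_strict_mono) auto
    ultimately show ?thesis by linarith
  qed
  finally show ?thesis .
qed

lemma deg_bound:
  fixes c :: point and q :: "nat \<Rightarrow> point" and r :: real
  assumes r: "r > 0" and sep: "\<forall>a<n. \<forall>b<n. a \<noteq> b \<longrightarrow> 2*r \<le> dist (q a) (q b)"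
  shows "card {j. j<n \<and> dist c (q j) < 2*r} \<le> 5"
proof -
  define J where "J = {j. j<n \<and> dist c (q j) < 2*r}"
  have finJ: "finite J" unfolding J_def by simp
  show ?thesis
  proof (cases "\<exists>j\<in>J. q j = c")
    case True
    then obtain j where j: "j \<in> J" "q j = c" by blast
    have "J \<subseteq> {j}"
    proof
      fix b assume b: "b \<in> J"
      show "b \<in> {j}"
      proof (rule ccontr)
        assume "b \<notin> {j}"
        moreover have "b < n" "j < n" using b j unfolding J_def by auto
        ultimately have "2*r \<le> dist (q j) (q b)" using sep by auto
        then show False using b j unfolding J_def by auto
      qed
    qed
    then have "card J \<le> card {j}" by (intro card_mono) auto
    then have "card J \<le> 1" by simp
    then show ?thesis unfolding J_def by simp
  next
    case False
    have "\<forall>j\<in>J. \<exists>t. (q j - c)$1 = norm (q j - c) * cos t \<and> (q j - c)$2 = norm (q j - c) * sin t \<and> 0 \<le> t \<and> t < 2*pi"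
      using False polar2 by (metis eq_iff_diff_eq_0)
    then obtain \<theta> where th: "\<And>j. j \<in> J \<Longrightarrow> (q j - c)$1 = norm (q j - c) * cos (\<theta> j) \<and> (q j - c)$2 = norm (q j - c) * sin (\<theta> j) \<and> 0 \<le> \<theta> j \<and> \<theta> j < 2*pi"
      by metis
    have pair: "cos (\<theta> a - \<theta> b) < 1/2" if ab: "a \<in> J" "b \<in> J" "a \<noteq> b" for a b
    proof (rule ccontr)
      assume "\<not> ?thesis"
      then have C: "cos (\<theta> a - \<theta> b) \<ge> 1/2" by simp
      define va where "va = q a - c"
      define vb where "vb = q b - c"
      have "va \<bullet> vb = norm va * norm vb * cos (\<theta> a - \<theta> b)"
        using th[OF ab(1)] th[OF ab(2)] unfolding inner2 va_def vb_def cos_diff by (simp add: algebra_simps)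
      moreover have "norm (va - vb)^2 = norm va ^2 + norm vb^2 - 2 * (va \<bullet> vb)"
        by (simp add: power2_norm_eq_inner inner_diff algebra_simps inner_commute)
      ultimately have "norm (va - vb)^2 = norm va ^2 + norm vb^2 - 2 * norm va * norm vb * cos (\<theta> a - \<theta> b)"
        by simp
      also have "\<dots> < (2*r)^2"
      proof (rule close_pts[OF _ _ _ _ C])
        have a1: "q a \<noteq> c" "q b \<noteq> c" using False ab by auto
        have a2: "dist c (q a) < 2*r" "dist c (q b) < 2*r" using ab unfolding J_def by auto
        show "0 < norm va" "0 < norm vb" using a1 unfolding va_def vb_def by auto
        show "norm va < 2*r" "norm vb < 2*r" using a2 unfolding va_def vb_def
          by (simp_all add: dist_norm norm_minus_commute)
      qed
      finally have "norm (va - vb) ^ 2 < (2*r)^2" .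
      then have "norm (va - vb) < 2*r"
        by (rule power_less_imp_less_base) (use r in simp)
      moreover have "va - vb = q a - q b" unfolding va_def vb_def by simp
      moreover have "a < n" "b < n" using ab unfolding J_def by auto
      moreover have "2*r \<le> dist (q a) (q b)" using sep calculation(3,4) ab(3) by blast
      ultimately show False by (simp add: dist_norm)
    qed
    show ?thesis
    proof (cases "J = {}")
      case True then have "card J \<le> 5" by simp
      then show ?thesis unfolding J_def .
    next
      case False
      then obtain j0 where j0: "j0 \<in> J" by blast
      define \<phi> where "\<phi> j = (if \<theta> j0 \<le> \<theta> j then \<theta> j - \<theta> j0 else \<theta> j - \<theta> j0 + 2*pi)" for j
      have cosphi: "cos (\<phi> a - \<phi> b) = cos (\<theta> a - \<theta> b)" for a b
      proof -
        have m: "cos (x - 2*pi) = cos x" for x by (simp add: cos_diff)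
        show ?thesis unfolding \<phi>_def
          using cos_periodic[of "\<theta> a - \<theta> b"] m[of "\<theta> a - \<theta> b"]
          by (auto simp: algebra_simps)
      qed
      have phirange: "0 \<le> \<phi> j \<and> \<phi> j < 2*pi" if "j \<in> J" for j
        unfolding \<phi>_def using th[OF that] th[OF j0] by auto
      have small: "cos (\<phi> j) < 1/2" if "j \<in> J" "j \<noteq> j0" for j
        using pair[OF that(1) j0 that(2)] cosphi[of j j0] by (simp add: \<phi>_def)
      define f where "f j = nat \<lfloor>3 * \<phi> j / pi\<rfloor>" for j
      have rng: "pi/3 < \<phi> j \<and> \<phi> j < 5*pi/3" if "j \<in> J" "j \<noteq> j0" for j
        using cos_small_range phirange small that by blast
      have fimg: "f ` (J - {j0}) \<subseteq> {1..4}"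
      proof
        fix y assume "y \<in> f ` (J - {j0})"
        then obtain j where j: "j \<in> J" "j \<noteq> j0" "y = f j" by blast
        have "1 < 3 * \<phi> j / pi" "3 * \<phi> j / pi < 5" using rng[OF j(1,2)] pi_gt_zero
          by (auto simp: field_simps)
        then have fl: "1 \<le> \<lfloor>3 * \<phi> j / pi\<rfloor>" "\<lfloor>3 * \<phi> j / pi\<rfloor> \<le> 4"
          by (auto simp: le_floor_iff floor_le_iff)
        have "1 \<le> nat \<lfloor>3 * \<phi> j / pi\<rfloor>" "nat \<lfloor>3 * \<phi> j / pi\<rfloor> \<le> 4"
          using fl by linarith+
        then show "y \<in> {1..4}" unfolding j(3) f_def by simp
      qed
      have finj: "inj_on f (J - {j0})"
      proof (rule inj_onI, rule ccontr)
        fix a b assume a: "a \<in> J - {j0}" and b: "b \<in> J - {j0}" and fab: "f a = f b" and ne: "a \<noteq> b"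
        have "0 \<le> \<phi> a" "0 \<le> \<phi> b" using rng[of a] rng[of b] a b pi_gt_zero by auto
        then have p: "0 \<le> 3 * \<phi> a / pi" "0 \<le> 3 * \<phi> b / pi" using pi_gt_zero by auto
        have "\<lfloor>3 * \<phi> a / pi\<rfloor> = \<lfloor>3 * \<phi> b / pi\<rfloor>"
          using fab p unfolding f_def by (metis floor_less_zero nat_eq_iff2 not_less)
        then have "\<bar>3 * \<phi> a / pi - 3 * \<phi> b / pi\<bar> < 1"
        proof -
          assume fe: "\<lfloor>3 * \<phi> a / pi\<rfloor> = \<lfloor>3 * \<phi> b / pi\<rfloor>"
          then have "real_of_int \<lfloor>3 * \<phi> a / pi\<rfloor> = real_of_int \<lfloor>3 * \<phi> b / pi\<rfloor>" by simp
          then show ?thesis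
            using of_int_floor_le[of "3 * \<phi> a / pi"] of_int_floor_le[of "3 * \<phi> b / pi"]
              real_of_int_floor_add_one_gt[of "3 * \<phi> a / pi"] real_of_int_floor_add_one_gt[of "3 * \<phi> b / pi"]
            by linarith
        qed
        then have "\<bar>\<phi> a - \<phi> b\<bar> < pi/3" using pi_gt_zero
          by (simp add: field_simps abs_if split: if_splits)
        then have "cos (\<phi> a - \<phi> b) > 1/2" by (rule cos_big)
        then show False using pair[of a b] a b ne cosphi by auto
      qed
      have "card (J - {j0}) \<le> card {1..4::nat}"
        by (rule card_inj_on_le[OF finj fimg]) simp
      then have "card (J - {j0}) \<le> 4" by simp
      moreover have "card J = card (J - {j0}) + 1"
        using j0 finJ by (metis card_Suc_Diff1 Suc_eq_plus1)
      ultimately show ?thesis unfolding J_def by simp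
    qed
  qed
qed



lemma cross_lemma:
  fixes s h :: "nat \<Rightarrow> point"
  assumes sepS: "2*r \<le> dist (s i) (s k) \<or> i = k"
    and sepH: "2*r \<le> dist (h j) (h l) \<or> j = l"
    and e1: "dist (s i) (h j) < 2*r" and e2: "dist (s k) (h l) < 2*r"
    and ne: "{Inl i, Inr j} \<noteq> ({Inl k, Inr l} :: (nat + nat) set)"
  shows "closed_segment (s i) (h j) \<inter> closed_segment (s k) (h l)
           \<subseteq> case_sum s h ` ({Inl i, Inr j} \<inter> {Inl k, Inr l})"
proof (cases "i = k")
  case True
  then have jl: "j \<noteq> l" using ne by auto
  have "closed_segment (s i) (h j) \<inter> closed_segment (s i) (h l) \<subseteq> {s i}"
    by (rule seg_common[of r]) (use sepH jl e1 e2 True in auto)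
  moreover have S: "{Inl i, Inr j} \<inter> {Inl i, Inr l} = {Inl i :: nat + nat}" using jl by auto
  ultimately show ?thesis unfolding True[symmetric] S by simp
next
  case False
  note ik = False
  show ?thesis
  proof (cases "j = l")
    case True
    have "closed_segment (h j) (s i) \<inter> closed_segment (h j) (s k) \<subseteq> {h j}"
      by (rule seg_common[of r]) (use sepS ik e1 e2 True in \<open>auto simp: dist_commute\<close>)
    moreover have S: "{Inl i, Inr j} \<inter> {Inl k, Inr j} = {Inr j :: nat + nat}" using ik by auto
    ultimately show ?thesis unfolding True[symmetric] S by (simp add: closed_segment_commute)
  next
    case False
    have "closed_segment (s i) (h j) \<inter> closed_segment (s k) (h l) = {}"
      by (rule seg_disjoint[of r]) (use sepS sepH ik False e1 e2 in auto)
    then show ?thesis by simp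
  qed
qed

theorem proposition3:
  fixes n :: nat and r :: real and W :: "point set"
    and s g :: "nat \<Rightarrow> point"
  assumes "r > 0"
    and "bounded W"
    and "\<forall>i<n. cball (s i) r \<subseteq> W"
    and "\<forall>i<n. cball (g i) r \<subseteq> W"
    and "feasible_arrangement r n s"
    and "feasible_arrangement r n g"
  shows "planar_graph (dep_vertices n) (dep_edge r s g) \<and>
         max_degree_le (dep_vertices n) (dep_edge r s g) 5"
proof -
  note r = assms(1)
  have sepS: "\<forall>a<n. \<forall>b<n. a \<noteq> b \<longrightarrow> 2*r \<le> dist (s a) (s b)"
    using assms(5) overlap_iff[OF r] unfolding feasible_arrangement_def by (auto simp: not_less)
  have sepG: "\<forall>a<n. \<forall>b<n. a \<noteq> b \<longrightarrow> 2*r \<le> dist (g a) (g b)"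
    using assms(6) overlap_iff[OF r] unfolding feasible_arrangement_def by (auto simp: not_less)
  define V where "V = dep_vertices n"
  define E where "E = dep_edge r s g"
  have deg: "max_degree_le V E 5"
    unfolding max_degree_le_def
  proof
    fix v assume "v \<in> V"
    show "card {w \<in> V. E v w} \<le> 5"
    proof (cases v)
      case (Inl i)
      have "{w \<in> V. E v w} \<subseteq> Inr ` {j. j<n \<and> dist (s i) (g j) < 2*r}"
      proof
        fix w assume w: "w \<in> {w \<in> V. E v w}"
        then show "w \<in> Inr ` {j. j<n \<and> dist (s i) (g j) < 2*r}"
          using Inl overlap_iff[OF r] by (cases w) (auto simp: V_def E_def dep_vertices_def)
      qed
      then have "card {w \<in> V. E v w} \<le> card (Inr ` {j. j<n \<and> dist (s i) (g j) < 2*r} :: (nat+nat) set)"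
        by (intro card_mono) auto
      also have "\<dots> \<le> card {j. j<n \<and> dist (s i) (g j) < 2*r}" by (rule card_image_le) simp
      also have "\<dots> \<le> 5" by (rule deg_bound[OF r sepG])
      finally show ?thesis .
    next
      case (Inr j)
      have "{w \<in> V. E v w} \<subseteq> Inl ` {i. i<n \<and> dist (g j) (s i) < 2*r}"
      proof
        fix w assume w: "w \<in> {w \<in> V. E v w}"
        then show "w \<in> Inl ` {i. i<n \<and> dist (g j) (s i) < 2*r}"
          using Inr overlap_iff[OF r] by (cases w) (auto simp: V_def E_def dep_vertices_def dist_commute)
      qed
      then have "card {w \<in> V. E v w} \<le> card (Inl ` {i. i<n \<and> dist (g j) (s i) < 2*r} :: (nat+nat) set)"
        by (intro card_mono) auto
      also have "\<dots> \<le> card {i. i<n \<and> dist (g j) (s i) < 2*r}" by (rule card_image_le) simp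
      also have "\<dots> \<le> 5" by (rule deg_bound[OF r sepS])
      finally show ?thesis .
    qed
  qed
  define X where "X = (\<lambda>(i,j). s i - g j) ` ({..<n} \<times> {..<n})"
  have finX: "finite X" unfolding X_def by simp
  define D where "D = insert 1 ((\<lambda>(i,j). 2*r - dist (s i) (g j)) ` {(i,j). i<n \<and> j<n \<and> dist (s i) (g j) < 2*r})"
  have finD: "finite D" unfolding D_def
    by (rule finite.insertI, rule finite_imageI, rule finite_subset[of _ "{..<n} \<times> {..<n}"]) auto
  define \<delta> where "\<delta> = Min D"
  have \<delta>pos: "\<delta> > 0" unfolding \<delta>_def using finD by (auto simp: D_def)
  have \<delta>le: "\<delta> \<le> 2*r - dist (s i) (g j)" if "i<n" "j<n" "dist (s i) (g j) < 2*r" for i j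
    unfolding \<delta>_def using finD that by (intro Min_le) (auto simp: D_def)
  obtain e where e: "e > 0" "\<forall>w\<in>ball 0 e. w \<in> UNIV \<and> (w \<noteq> 0 \<longrightarrow> w \<notin> X)"
    using finite_ball_avoid[OF open_UNIV finX, of 0] by auto
  define m where "m = min e \<delta> / 2"
  define t :: point where "t = m *\<^sub>R axis 1 1"
  have mpos: "m > 0" unfolding m_def using e \<delta>pos by simp
  have nt: "norm t = m" unfolding t_def using mpos by simp
  have tX: "t \<notin> X"
  proof -
    have "t \<in> ball 0 e" using nt e unfolding m_def by simp
    moreover have "t \<noteq> 0" using nt mpos by auto
    ultimately show ?thesis using e by blast
  qed
  define h where "h j = g j + t" for j
  have E1: "s i \<noteq> h j" if "i<n" "j<n" for i j
  proof
    assume "s i = h j"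
    then have "t = s i - g j" unfolding h_def by simp
    then have "t \<in> X" unfolding X_def using that by auto
    then show False using tX by simp
  qed
  have E2: "dist (s i) (h j) < 2*r" if "i<n" "j<n" "disc_overlap r (s i) (g j)" for i j
  proof -
    have d: "dist (s i) (g j) < 2*r" using that overlap_iff[OF r] by simp
    have "dist (s i) (h j) \<le> dist (s i) (g j) + norm t" unfolding h_def
      by (metis dist_norm diff_diff_eq norm_triangle_ineq4 add.commute)
    also have "\<dots> < dist (s i) (g j) + \<delta>" using nt unfolding m_def using \<delta>pos e by simp
    also have "\<dots> \<le> 2*r" using \<delta>le[OF that(1,2) d] by simp
    finally show ?thesis .
  qed
  have sepH: "\<forall>a<n. \<forall>b<n. a \<noteq> b \<longrightarrow> 2*r \<le> dist (h a) (h b)"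
    using sepG unfolding h_def by (simp add: dist_norm)
  define p where "p = case_sum s h"
  define \<gamma> where "\<gamma> u v = linepath (p u) (p v)" for u v
  have segV: "closed_segment (s i) (h j) \<inter> p ` V = {s i, h j}"
    if "i<n" "j<n" "dist (s i) (h j) < 2*r" for i j
  proof
    show "{s i, h j} \<subseteq> closed_segment (s i) (h j) \<inter> p ` V"
    proof -
      have "s i = p (Inl i)" "h j = p (Inr j)" "Inl i \<in> V" "Inr j \<in> V"
        using that by (auto simp: p_def V_def dep_vertices_def)
      then show ?thesis by auto
    qed
  next
    show "closed_segment (s i) (h j) \<inter> p ` V \<subseteq> {s i, h j}"
    proof
      fix x assume x: "x \<in> closed_segment (s i) (h j) \<inter> p ` V"
      then obtain w where w: "w \<in> V" "x = p w" by blast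
      have dx: "dist x (s i) \<le> dist (s i) (h j) \<and> dist x (h j) \<le> dist (s i) (h j)"
        using x dist_in_closed_segment by blast
      show "x \<in> {s i, h j}"
      proof (cases w)
        case (Inl k)
        then have k: "k < n" "x = s k" using w by (auto simp: V_def dep_vertices_def p_def)
        have "k = i"
        proof (rule ccontr)
          assume "k \<noteq> i"
          then have "2*r \<le> dist (s k) (s i)" using sepS k that by auto
          moreover have "dist (s k) (s i) \<le> dist (s i) (h j)" using dx k by simp
          ultimately show False using that by linarith
        qed
        then show ?thesis using k by simp
      next
        case (Inr l)
        then have l: "l < n" "x = h l" using w by (auto simp: V_def dep_vertices_def p_def)
        have "l = j"
        proof (rule ccontr)
          assume "l \<noteq> j"
          then have "2*r \<le> dist (h l) (h j)" using sepH l that by auto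
          moreover have "dist (h l) (h j) \<le> dist (s i) (h j)" using dx l by simp
          ultimately show False using that by linarith
        qed
        then show ?thesis using l by simp
      qed
    qed
  qed
  have edge_form: "\<exists>i j. i<n \<and> j<n \<and> {u,v} = {Inl i, Inr j} \<and>
      path_image (\<gamma> u v) = closed_segment (s i) (h j) \<and> dist (s i) (h j) < 2*r"
    if uvE: "u \<in> V" "v \<in> V" "E u v" for u v
  proof (cases u)
    case (Inl i)
    then obtain j where j: "v = Inr j" using uvE by (cases v) (auto simp: E_def)
    show ?thesis
      using uvE Inl j E2 by (intro exI[of _ i] exI[of _ j])
        (auto simp: V_def dep_vertices_def E_def \<gamma>_def p_def)
  next
    case (Inr j)
    then obtain i where i: "v = Inl i" using uvE by (cases v) (auto simp: E_def)
    show ?thesis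
      using uvE Inr i E2 by (intro exI[of _ i] exI[of _ j])
        (auto simp: V_def dep_vertices_def E_def \<gamma>_def p_def closed_segment_commute)
  qed
  have planar: "planar_graph V E"
    unfolding planar_graph_def
  proof (intro exI[of _ p] exI[of _ \<gamma>] conjI)
    show "inj_on p V"
    proof (rule inj_onI)
      fix x y assume "x \<in> V" "y \<in> V" "p x = p y"
      then show "x = y"
        using sepS sepH E1 r
        by (cases x; cases y) (auto simp: V_def dep_vertices_def p_def, (metis dist_self not_less mult_pos_pos zero_less_numeral)+)
    qed
  next
    show "\<forall>u\<in>V. \<forall>v\<in>V. E u v \<longrightarrow> arc (\<gamma> u v) \<and> pathstart (\<gamma> u v) = p u \<and>
            pathfinish (\<gamma> u v) = p v \<and> path_image (\<gamma> u v) \<inter> p ` V = {p u, p v}"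
    proof (intro ballI impI)
      fix u v assume uv: "u \<in> V" "v \<in> V" "E u v"
      show "arc (\<gamma> u v) \<and> pathstart (\<gamma> u v) = p u \<and>
            pathfinish (\<gamma> u v) = p v \<and> path_image (\<gamma> u v) \<inter> p ` V = {p u, p v}"
      proof (cases u)
        case (Inl i)
        then obtain j where j: "v = Inr j" using uv by (cases v) (auto simp: E_def)
        have ij: "i < n" "j < n" using uv Inl j by (auto simp: V_def dep_vertices_def)
        have d: "dist (s i) (h j) < 2*r" using E2 ij uv Inl j by (auto simp: E_def)
        show ?thesis using segV[OF ij d] E1[OF ij] Inl j
          by (auto simp: \<gamma>_def p_def arc_linepath)
      next
        case (Inr j)
        then obtain i where i: "v = Inl i" using uv by (cases v) (auto simp: E_def)
        have ij: "i < n" "j < n" using uv Inr i by (auto simp: V_def dep_vertices_def)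
        have d: "dist (s i) (h j) < 2*r" using E2 ij uv Inr i by (auto simp: E_def)
        show ?thesis using segV[OF ij d] E1[OF ij] Inr i
          by (auto simp: \<gamma>_def p_def arc_linepath closed_segment_commute)
      qed
    qed
  next
    show "\<forall>u\<in>V. \<forall>v\<in>V. \<forall>u'\<in>V. \<forall>v'\<in>V. E u v \<longrightarrow> E u' v' \<longrightarrow> {u, v} \<noteq> {u', v'} \<longrightarrow>
          path_image (\<gamma> u v) \<inter> path_image (\<gamma> u' v') \<subseteq> p ` ({u, v} \<inter> {u', v'})"
    proof (intro ballI impI)
      fix u v u' v' assume V: "u \<in> V" "v \<in> V" "u' \<in> V" "v' \<in> V"
        and e: "E u v" "E u' v'" and ne: "{u, v} \<noteq> {u', v'}"
      obtain i j where ij: "i<n" "j<n" "{u,v} = {Inl i, Inr j}"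
        "path_image (\<gamma> u v) = closed_segment (s i) (h j)" "dist (s i) (h j) < 2*r"
        using edge_form[OF V(1,2) e(1)] by blast
      obtain k l where kl: "k<n" "l<n" "{u',v'} = {Inl k, Inr l}"
        "path_image (\<gamma> u' v') = closed_segment (s k) (h l)" "dist (s k) (h l) < 2*r"
        using edge_form[OF V(3,4) e(2)] by blast
      have "closed_segment (s i) (h j) \<inter> closed_segment (s k) (h l)
           \<subseteq> case_sum s h ` ({Inl i, Inr j} \<inter> {Inl k, Inr l})"
        by (rule cross_lemma[of r]) (use sepS sepH ij kl ne in auto)
      then show "path_image (\<gamma> u v) \<inter> path_image (\<gamma> u' v') \<subseteq> p ` ({u, v} \<inter> {u', v'})"
        using ij kl unfolding p_def by simp
    qed
  qed
  show ?thesis using planar deg unfolding V_def E_def by simp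
qed

end
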